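(* Let $Z$ be a real Banach space and $f:Z\to\mathbb{R}$ a continuous convex function. Then there exists a unique closed linear subspace $Y_f$ of $Z$ such that, for the quotient space $X_f:=Z/Y_f$ and the natural projection $\pi:Z\to X_f$, the function $f$ can be written as $$f(z)=c(\pi(z))+\ell(z)\quad\text{for all } z\in Z,$$ where $\ell\in Z^*$ and $c:X_f\to[a,\infty)$ is a convex function which is not constant on any line (i.e. there are no $\hat x,\hat v\in X_f$ with $\hat v\neq 0$ and $t\mapsto c(\hat x+t\hat v)$ constant on $\mathbb{R}$), with $a\in c(X_f)$. Moreover, $$Y_f=\{v\in Z: f(z_0+tv)-f(z_0)-\langle \xi_0,tv\rangle=0 \text{ for all } t\in\mathbb{R}\},$$ where $z_0$ is any point of $Z$ and $\xi_0$ is any element of $\partial f(z_0)$.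
   Context: For a continuous convex $f$ on a Banach space $Z$ with dual $Z^*$ and duality pairing $\langle\cdot,\cdot\rangle$, $\partial f(x)=\{\xi\in Z^*: f(y)\ge f(x)+\langle\xi,y-x\rangle \text{ for all } y\in Z\}$ (nonempty for every $x$). $Z/Y_f$ carries the quotient norm. *)

theory Defs
  imports "HOL-Analysis.Analysis"
begin

definition dual_space :: "('z::real_normed_vector \<Rightarrow> real) set" where
  "dual_space = {\<xi>. bounded_linear \<xi>}"

definition subdiff :: "('z::real_normed_vector \<Rightarrow> real) \<Rightarrow> 'z \<Rightarrow> ('z \<Rightarrow> real) set" where
  "subdiff f x = {\<xi> \<in> dual_space. \<forall>y. f y \<ge> f x + \<xi> (y - x)}"

text \<open>Quotient space Z/Y realised as the set of cosets z + Y, with the natural projection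
  and the induced vector operations.\<close>
definition quot_proj :: "'z::real_vector set \<Rightarrow> 'z \<Rightarrow> 'z set" where
  "quot_proj Y z = (\<lambda>y. z + y) ` Y"

definition quot_space :: "'z::real_vector set \<Rightarrow> 'z set set" where
  "quot_space Y = range (quot_proj Y)"

definition quot_add :: "'z::real_vector set \<Rightarrow> 'z set \<Rightarrow> 'z set \<Rightarrow> 'z set" where
  "quot_add Y A B = quot_proj Y ((SOME a. a \<in> A) + (SOME b. b \<in> B))"

definition quot_scale :: "'z::real_vector set \<Rightarrow> real \<Rightarrow> 'z set \<Rightarrow> 'z set" where
  "quot_scale Y t A = quot_proj Y (t *\<^sub>R (SOME a. a \<in> A))"

definition quot_zero :: "'z::real_vector set \<Rightarrow> 'z set" where
  "quot_zero Y = quot_proj Y 0"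

definition quot_convex_on :: "'z::real_vector set \<Rightarrow> ('z set \<Rightarrow> real) \<Rightarrow> bool" where
  "quot_convex_on Y c \<longleftrightarrow>
     (\<forall>A\<in>quot_space Y. \<forall>B\<in>quot_space Y. \<forall>u::real. 0 \<le> u \<and> u \<le> 1 \<longrightarrow>
        c (quot_add Y (quot_scale Y u A) (quot_scale Y (1 - u) B)) \<le> u * c A + (1 - u) * c B)"

definition quot_const_on_some_line :: "'z::real_vector set \<Rightarrow> ('z set \<Rightarrow> real) \<Rightarrow> bool" where
  "quot_const_on_some_line Y c \<longleftrightarrow>
     (\<exists>X\<in>quot_space Y. \<exists>V\<in>quot_space Y. V \<noteq> quot_zero Y \<and>
        (\<exists>k. \<forall>t::real. c (quot_add Y X (quot_scale Y t V)) = k))"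

definition decomposes :: "('z::real_normed_vector \<Rightarrow> real) \<Rightarrow> 'z set \<Rightarrow> bool" where
  "decomposes f Y \<longleftrightarrow>
     (\<exists>c l a. l \<in> dual_space \<and>
        quot_convex_on Y c \<and> \<not> quot_const_on_some_line Y c \<and>
        (\<forall>X\<in>quot_space Y. c X \<ge> a) \<and> a \<in> c ` quot_space Y \<and>
        (\<forall>z. f z = c (quot_proj Y z) + l z))"

end

theory Submission
  imports Defs
begin


lemma hb_key:
  fixes g :: "'a::real_vector \<Rightarrow> real"
  assumes cv: "convex_on UNIV g" and sub: "subspace G"
    and dom: "\<And>x a. (x,a)\<in>G \<Longrightarrow> a \<le> g x"
    and yb: "(y,b) \<in> G" and zc: "(z,c) \<in> G" and s: "s > 0" and t: "t > 0"
  shows "(b - g (y - s *\<^sub>R w)) / s \<le> (g (z + t *\<^sub>R w) - c) / t"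
proof -
  define l where "l = s / (s + t)"
  have l01: "0 \<le> l" "l \<le> 1" using s t by (auto simp: l_def field_simps)
  have P: "(1 - l) *\<^sub>R (y - s *\<^sub>R w) + l *\<^sub>R (z + t *\<^sub>R w) = (1 - l) *\<^sub>R y + l *\<^sub>R z"
  proof -
    have "(1 - l) * s = l * t" using s t by (simp add: l_def field_simps)
    then show ?thesis
      apply (simp add: algebra_simps)
      by (metis scaleR_add_left scaleR_scaleR)
  qed
  have mem: "((1 - l) *\<^sub>R y + l *\<^sub>R z, (1 - l) * b + l * c) \<in> G"
  proof -
    have "(1 - l) *\<^sub>R (y,b) + l *\<^sub>R (z,c) \<in> G"
      using sub yb zc by (intro subspace_add subspace_scale) auto
    then show ?thesis by simp
  qed
  have "(1 - l) * b + l * c \<le> g ((1 - l) *\<^sub>R y + l *\<^sub>R z)" using dom[OF mem] .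
  also have "\<dots> = g ((1 - l) *\<^sub>R (y - s *\<^sub>R w) + l *\<^sub>R (z + t *\<^sub>R w))" using P by simp
  also have "\<dots> \<le> (1 - l) * g (y - s *\<^sub>R w) + l * g (z + t *\<^sub>R w)"
    using convex_onD[OF cv, of l] l01 by auto
  finally have ineq: "(1 - l) * b + l * c \<le> (1 - l) * g (y - s *\<^sub>R w) + l * g (z + t *\<^sub>R w)" .
  have st: "s + t \<noteq> 0" using s t by simp
  define g1 where "g1 = g (y - s *\<^sub>R w)"
  define g2 where "g2 = g (z + t *\<^sub>R w)"
  have ml: "1 - l = t / (s+t)" using s t by (simp add: l_def field_simps)
  have e1: "(1 - l) * b + l * c = (t*b + s*c) / (s+t)" by (subst ml) (simp add: l_def add_divide_distrib)
  have e2: "(1 - l) * g1 + l * g2 = (t*g1 + s*g2) / (s+t)" by (subst ml) (simp add: l_def add_divide_distrib)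
  have "(t*b + s*c) / (s+t) \<le> (t*g1 + s*g2) / (s+t)" using ineq e1 e2 by (simp add: g1_def g2_def)
  then have "t * b + s * c \<le> t * g1 + s * g2" using s t by (simp add: divide_le_cancel)
  then have "t * (b - g1) \<le> s * (g2 - c)" by (simp add: algebra_simps)
  then have "(b - g1) / s \<le> (g2 - c) / t" using s t by (simp add: field_simps mult.commute)
  then show ?thesis by (simp add: g1_def g2_def)
qed

lemma hb_ext:
  fixes g :: "'a::real_vector \<Rightarrow> real"
  assumes cv: "convex_on UNIV g" and sub: "subspace G"
    and dom: "\<And>x a. (x,a)\<in>G \<Longrightarrow> a \<le> g x" and z0: "(0,0) \<in> G"
  shows "\<exists>\<alpha>. \<forall>x a t. (x,a)\<in>G \<longrightarrow> a + t * \<alpha> \<le> g (x + t *\<^sub>R w)"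
proof -
  define S where "S = {(b - g (y - s *\<^sub>R w)) / s | y b s. (y,b) \<in> G \<and> s > 0}"
  have "(0 - g (0 - 1 *\<^sub>R w)) / 1 \<in> S" unfolding S_def mem_Collect_eq
    apply (rule exI[of _ 0], rule exI[of _ 0], rule exI[of _ 1]) using z0 by simp
  then have ne: "S \<noteq> {}" by blast
  have ub: "\<And>q z c (t::real). q \<in> S \<Longrightarrow> (z,c) \<in> G \<Longrightarrow> t > 0 \<Longrightarrow> q \<le> (g (z + t *\<^sub>R w) - c) / t"
  proof -
    fix q z c and t :: real assume q: "q \<in> S" and zc: "(z,c) \<in> G" and t: "t > 0"
    from q obtain y b s where q': "q = (b - g (y - s *\<^sub>R w)) / s" and yb: "(y,b) \<in> G" and s: "s > 0"
      unfolding S_def by blast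
    show "q \<le> (g (z + t *\<^sub>R w) - c) / t" unfolding q' by (rule hb_key[OF cv sub dom yb zc s t])
  qed
  have bdd: "bdd_above S"
  proof (rule bdd_aboveI)
    fix q assume "q \<in> S" then show "q \<le> (g (0 + 1 *\<^sub>R w) - 0) / 1" by (rule ub[OF _ z0]) simp
  qed
  define \<alpha> where "\<alpha> = Sup S"
  show ?thesis
  proof (intro exI allI impI)
    fix x a and t :: real assume xa: "(x,a) \<in> G"
    consider "t > 0" | "t < 0" | "t = 0" by linarith
    then show "a + t * \<alpha> \<le> g (x + t *\<^sub>R w)"
    proof cases
      case 1
      have "\<alpha> \<le> (g (x + t *\<^sub>R w) - a) / t"
        unfolding \<alpha>_def using ne by (rule cSup_least) (rule ub[OF _ xa 1])
      then show ?thesis using 1 by (simp add: field_simps)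
    next
      case 2
      define s where "s = - t"
      have s: "s > 0" using 2 by (simp add: s_def)
      have "(a - g (x - s *\<^sub>R w)) / s \<in> S" unfolding S_def mem_Collect_eq
        apply (rule exI[of _ x], rule exI[of _ a], rule exI[of _ s]) using xa s by simp
      then have "(a - g (x - s *\<^sub>R w)) / s \<le> \<alpha>" unfolding \<alpha>_def using bdd by (rule cSup_upper)
      then have "a - g (x - s *\<^sub>R w) \<le> s * \<alpha>" using s by (simp add: field_simps)
      then show ?thesis by (simp add: s_def)
    next
      case 3 then show ?thesis using dom[OF xa] by simp
    qed
  qed
qed

lemma hb_convex:
  fixes g :: "'a::real_vector \<Rightarrow> real"
  assumes cv: "convex_on UNIV g" and g0: "g 0 = 0"
  shows "\<exists>l. linear l \<and> (\<forall>x. l x \<le> g x)"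
proof -
  define A where "A = {G :: ('a \<times> real) set. subspace G \<and> (\<forall>x a. (x,a) \<in> G \<longrightarrow> a \<le> g x)}"
  have "\<exists>M\<in>A. \<forall>X\<in>A. M \<subseteq> X \<longrightarrow> X = M"
  proof (rule Zorn_Lemma2, intro ballI)
    fix C assume C: "C \<in> chains A"
    show "\<exists>U\<in>A. \<forall>X\<in>C. X \<subseteq> U"
    proof (cases "C = {}")
      case True
      have "{(0,0)} \<in> A" unfolding A_def using g0 subspace_single_0[where 'a="'a \<times> real"]
        by (simp add: zero_prod_def)
      then show ?thesis using True by blast
    next
      case False
      have CA: "C \<subseteq> A" using C by (rule chainsD2)
      have "\<Union>C \<in> A" unfolding A_def
      proof (intro CollectI conjI allI impI)
        show "subspace (\<Union>C)" unfolding subspace_def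
        proof (intro conjI ballI allI)
          obtain X where "X \<in> C" using False by blast
          then show "0 \<in> \<Union>C" using CA unfolding A_def subspace_def by blast
        next
          fix p q assume "p \<in> \<Union>C" "q \<in> \<Union>C"
          then obtain X Y where X: "X \<in> C" "p \<in> X" and Y: "Y \<in> C" "q \<in> Y" by blast
          have "X \<subseteq> Y \<or> Y \<subseteq> X" using chainsD[OF C X(1) Y(1)] .
          then show "p + q \<in> \<Union>C"
          proof
            assume "X \<subseteq> Y"
            then have "subspace Y" "p \<in> Y" "q \<in> Y" using CA Y X unfolding A_def by auto
            then show ?thesis using Y(1) by (meson UnionI subspace_add)
          next
            assume "Y \<subseteq> X"
            then have "subspace X" "p \<in> X" "q \<in> X" using CA Y X unfolding A_def by auto
            then show ?thesis using X(1) by (meson UnionI subspace_add)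
          qed
        next
          fix c and p assume "p \<in> \<Union>C"
          then obtain X where X: "X \<in> C" "p \<in> X" by blast
          then have "subspace X" using CA unfolding A_def by auto
          then show "c *\<^sub>R p \<in> \<Union>C" using X by (meson UnionI subspace_scale)
        qed
      next
        fix x a assume "(x,a) \<in> \<Union>C"
        then show "a \<le> g x" using CA unfolding A_def by auto
      qed
      then show ?thesis by blast
    qed
  qed
  then obtain M where MA: "M \<in> A" and Mmax: "\<And>X. X \<in> A \<Longrightarrow> M \<subseteq> X \<Longrightarrow> X = M" by blast
  have subM: "subspace M" and domM: "\<And>x a. (x,a) \<in> M \<Longrightarrow> a \<le> g x" using MA unfolding A_def by auto
  have z0: "(0,0) \<in> M" using subM subspace_0 by (metis zero_prod_def)
  have total: "\<exists>a. (x,a) \<in> M" for x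
  proof (rule ccontr)
    assume nx: "\<not> (\<exists>a. (x,a) \<in> M)"
    obtain \<alpha> where al: "\<And>y a t. (y,a)\<in>M \<Longrightarrow> a + t * \<alpha> \<le> g (y + t *\<^sub>R x)"
      using hb_ext[OF cv subM domM z0, of x] by blast
    define M' where "M' = {(y + t *\<^sub>R x, a + t * \<alpha>) | y a t. (y,a) \<in> M}"
    have "M' \<in> A" unfolding A_def
    proof (intro CollectI conjI allI impI)
      show "subspace M'" unfolding subspace_def
      proof (intro conjI ballI allI)
        show "0 \<in> M'" unfolding M'_def using z0 by (force simp: zero_prod_def)
      next
        fix p q assume "p \<in> M'" "q \<in> M'"
        then obtain y a t y' a' t' where p: "p = (y + t *\<^sub>R x, a + t * \<alpha>)" "(y,a) \<in> M"
          and q: "q = (y' + t' *\<^sub>R x, a' + t' * \<alpha>)" "(y',a') \<in> M"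
          unfolding M'_def by blast
        have "(y,a) + (y',a') \<in> M" using subM p(2) q(2) by (rule subspace_add)
        then have "(y + y', a + a') \<in> M" by simp
        moreover have "p + q = ((y + y') + (t + t') *\<^sub>R x, (a + a') + (t + t') * \<alpha>)"
          using p q by (simp add: algebra_simps)
        ultimately show "p + q \<in> M'" unfolding M'_def by blast
      next
        fix c and p assume "p \<in> M'"
        then obtain y a t where p: "p = (y + t *\<^sub>R x, a + t * \<alpha>)" "(y,a) \<in> M"
          unfolding M'_def by blast
        have "c *\<^sub>R (y,a) \<in> M" using subM p(2) by (rule subspace_scale)
        then have "(c *\<^sub>R y, c * a) \<in> M" by simp
        moreover have "c *\<^sub>R p = (c *\<^sub>R y + (c * t) *\<^sub>R x, c * a + (c * t) * \<alpha>)"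
          using p by (simp add: algebra_simps)
        ultimately show "c *\<^sub>R p \<in> M'" unfolding M'_def by blast
      qed
    next
      fix y b assume "(y,b) \<in> M'"
      then obtain y0 a t where "y = y0 + t *\<^sub>R x" "b = a + t * \<alpha>" "(y0,a) \<in> M"
        unfolding M'_def by blast
      then show "b \<le> g y" using al by simp
    qed
    moreover have "M \<subseteq> M'"
    proof
      fix p assume "p \<in> M"
      moreover obtain y a where "p = (y,a)" by fastforce
      ultimately show "p \<in> M'" unfolding M'_def
        by (intro CollectI exI[of _ y] exI[of _ a] exI[of _ 0]) simp
    qed
    ultimately have "M' = M" by (rule Mmax)
    moreover have "(x, \<alpha>) \<in> M'" unfolding M'_def
      by (intro CollectI exI[of _ 0] exI[of _ 0] exI[of _ 1]) (simp add: z0)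
    ultimately show False using nx by blast
  qed
  have func: "a = b" if "(x,a) \<in> M" "(x,b) \<in> M" for x a b
  proof -
    have "(x,a) - (x,b) \<in> M" using subM that by (rule subspace_diff)
    then have d: "(0, a - b) \<in> M" by simp
    have "(-1) *\<^sub>R (0, a - b) \<in> M" using subM d by (rule subspace_scale)
    then have "(0, b - a) \<in> M" by simp
    from domM[OF d] domM[OF this] show ?thesis using g0 by simp
  qed
  define l where "l x = (SOME a. (x,a) \<in> M)" for x
  have lM: "(x, l x) \<in> M" for x unfolding l_def using total[of x] by (rule someI_ex)
  have "linear l"
  proof (rule linearI)
    fix x y
    have "(x, l x) + (y, l y) \<in> M" using subM lM lM by (rule subspace_add)
    then show "l (x + y) = l x + l y" using func lM[of "x+y"] by simp
  next
    fix c and x :: 'a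
    have "c *\<^sub>R (x, l x) \<in> M" using subM lM by (rule subspace_scale)
    then show "l (c *\<^sub>R x) = c *\<^sub>R l x" using func lM[of "c *\<^sub>R x"] by simp
  qed
  moreover have "l x \<le> g x" for x using domM[OF lM] .
  ultimately show ?thesis by blast
qed

lemma subdiff_nonempty:
  fixes f :: "'z::real_normed_vector \<Rightarrow> real"
  assumes cont: "continuous_on UNIV f" and cv: "convex_on UNIV f"
  shows "\<exists>\<xi>. \<xi> \<in> subdiff f x0"
proof -
  define g where "g v = f (x0 + v) - f x0" for v
  have cvg: "convex_on UNIV g"
  proof (rule convex_onI)
    show "convex (UNIV :: 'z set)" by simp
  next
    fix t :: real and u v :: 'z assume "0 < t" "t < 1"
    then have t: "0 \<le> t \<and> t \<le> 1" by simp
    have "x0 + ((1 - t) *\<^sub>R u + t *\<^sub>R v) = (1 - t) *\<^sub>R (x0 + u) + t *\<^sub>R (x0 + v)"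
      by (simp add: algebra_simps)
    moreover have "f ((1 - t) *\<^sub>R (x0 + u) + t *\<^sub>R (x0 + v)) \<le> (1 - t) * f (x0 + u) + t * f (x0 + v)"
      using convex_onD[OF cv] t by auto
    ultimately show "g ((1 - t) *\<^sub>R u + t *\<^sub>R v) \<le> (1 - t) * g u + t * g v"
      unfolding g_def by (simp add: algebra_simps)
  qed
  obtain l where lin: "linear l" and lg: "\<And>x. l x \<le> g x"
    using hb_convex[OF cvg] by (auto simp: g_def)
  have "continuous (at x0) f" using cont by (simp add: continuous_on_eq_continuous_at)
  then obtain d where d: "d > 0" and dd: "\<And>x'. dist x' x0 < d \<Longrightarrow> dist (f x') (f x0) < 1"
    unfolding continuous_at_eps_delta by (meson zero_less_one)
  define \<delta> where "\<delta> = d / 2"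
  have dl: "\<delta> > 0" using d by (simp add: \<delta>_def)
  have up: "l x \<le> norm x / \<delta>" for x
  proof (cases "x = 0")
    case True then show ?thesis using linear_0[OF lin] by simp
  next
    case False
    define v where "v = (\<delta> / norm x) *\<^sub>R x"
    have nv: "norm v = \<delta>" using False dl by (simp add: v_def)
    then have "dist (x0 + v) x0 < d" using d by (simp add: dist_norm \<delta>_def)
    then have "g v < 1" using dd[of "x0 + v"] by (simp add: g_def dist_real_def)
    then have "l v < 1" using lg[of v] by simp
    moreover have "l v = (\<delta> / norm x) * l x" unfolding v_def using linear_scale[OF lin] by simp
    ultimately have "(\<delta> / norm x) * l x < 1" by simp
    then have "\<delta> * l x < norm x" using False by (simp add: field_simps)
    then show ?thesis using dl by (simp add: field_simps)
  qed
  have bl: "bounded_linear l"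
  proof (rule bounded_linear_intro[where K = "1 / \<delta>"])
    fix x y show "l (x + y) = l x + l y" by (rule linear_add[OF lin])
  next
    fix r x show "l (r *\<^sub>R x) = r *\<^sub>R l x" by (rule linear_scale[OF lin])
  next
    fix x
    have "l (- x) \<le> norm x / \<delta>" using up[of "-x"] by simp
    then have "- l x \<le> norm x / \<delta>" using linear_neg[OF lin] by simp
    then show "norm (l x) \<le> norm x * (1 / \<delta>)" using up[of x] by simp
  qed
  have "l \<in> subdiff f x0" unfolding subdiff_def dual_space_def
  proof (intro CollectI conjI allI bl)
    fix y show "f x0 + l (y - x0) \<le> f y" using lg[of "y - x0"] by (simp add: g_def)
  qed
  then show ?thesis by blast
qed



lemma const_line_aux:
  fixes h :: "'z::real_vector \<Rightarrow> real"
  assumes cv: "convex_on UNIV h" and bnd: "\<And>t. h (x + t *\<^sub>R v) \<le> M"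
  shows "h (x + b *\<^sub>R v) \<le> h (x + a *\<^sub>R v)"
proof (rule ccontr)
  assume "\<not> ?thesis"
  then have lt: "h (x + a *\<^sub>R v) < h (x + b *\<^sub>R v)" by simp
  define D where "D = h (x + b *\<^sub>R v) - h (x + a *\<^sub>R v)"
  have D: "D > 0" using lt by (simp add: D_def)
  define s where "s = max 1 ((M - h (x + a *\<^sub>R v)) / D + 1)"
  have s1: "s \<ge> 1" by (simp add: s_def)
  have s2: "s \<ge> (M - h (x + a *\<^sub>R v)) / D + 1" by (simp add: s_def)
  define c where "c = a + s * (b - a)"
  have pt: "x + b *\<^sub>R v = (1 - 1/s) *\<^sub>R (x + a *\<^sub>R v) + (1/s) *\<^sub>R (x + c *\<^sub>R v)"
  proof -
    have "(1 - 1/s) * a + (1/s) * c = b" using s1 by (simp add: c_def field_simps)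
    then have "((1 - 1/s) * a + (1/s) * c) *\<^sub>R v = b *\<^sub>R v" by simp
    then show ?thesis by (simp add: algebra_simps scaleR_add_left[symmetric] del: scaleR_add_left) (metis eq_commute)
  qed
  have "h (x + b *\<^sub>R v) \<le> (1 - 1/s) * h (x + a *\<^sub>R v) + (1/s) * h (x + c *\<^sub>R v)"
    unfolding pt using s1 by (intro convex_onD[OF cv]) (auto simp: field_simps)
  then have "s * h (x + b *\<^sub>R v) \<le> (s - 1) * h (x + a *\<^sub>R v) + h (x + c *\<^sub>R v)"
    using s1 by (simp add: field_simps)
  then have "h (x + c *\<^sub>R v) \<ge> h (x + a *\<^sub>R v) + s * D" by (simp add: D_def algebra_simps)
  moreover have "s * D \<ge> (M - h (x + a *\<^sub>R v)) + D"
  proof -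
    have "s * D \<ge> ((M - h (x + a *\<^sub>R v)) / D + 1) * D" using s2 D by (intro mult_right_mono) auto
    moreover have "((M - h (x + a *\<^sub>R v)) / D + 1) * D = (M - h (x + a *\<^sub>R v)) + D"
      using D by (simp add: field_simps)
    ultimately show ?thesis by linarith
  qed
  ultimately have "h (x + c *\<^sub>R v) > M" using D by linarith
  with bnd[of c] show False by simp
qed

lemma const_line:
  fixes h :: "'z::real_vector \<Rightarrow> real"
  assumes cv: "convex_on UNIV h" and bnd: "\<And>t. h (x + t *\<^sub>R v) \<le> M"
  shows "h (x + t *\<^sub>R v) = h x"
  using const_line_aux[OF cv bnd, of t 0] const_line_aux[OF cv bnd, of 0 t] by simp

lemma mid_le:
  fixes h :: "'z::real_vector \<Rightarrow> real"
  assumes cv: "convex_on UNIV h"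
  shows "h ((1/2) *\<^sub>R p + (1/2) *\<^sub>R q) \<le> (1/2) * h p + (1/2) * h q"
  using convex_onD[OF cv, of "1/2" p q] by simp

context fixes Y :: "'z::real_vector set" assumes sub: "subspace Y"
begin

lemma qp_self: "z \<in> quot_proj Y z"
  unfolding quot_proj_def using subspace_0[OF sub] by force

lemma qp_add: "y \<in> Y \<Longrightarrow> quot_proj Y (z + y) = quot_proj Y z"
  unfolding quot_proj_def
proof (intro set_eqI iffI)
  fix w assume y: "y \<in> Y"
  { assume "w \<in> (+) (z + y) ` Y"
    then obtain u where "u \<in> Y" "w = z + y + u" by blast
    then show "w \<in> (+) z ` Y" using subspace_add[OF sub y] by (auto simp: add.assoc intro!: image_eqI) }
  { assume "w \<in> (+) z ` Y"
    then obtain u where u: "u \<in> Y" "w = z + u" by blast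
    have "u - y \<in> Y" using subspace_diff[OF sub u(1) y] .
    then show "w \<in> (+) (z + y) ` Y" using u by (intro image_eqI[of _ _ "u - y"]) auto }
qed

lemma qp_mem: "x \<in> quot_proj Y z \<Longrightarrow> \<exists>y\<in>Y. x = z + y"
  unfolding quot_proj_def by auto

lemma qp_rep: "\<exists>y\<in>Y. (SOME x. x \<in> quot_proj Y z) = z + y"
  using someI[of "\<lambda>x. x \<in> quot_proj Y z", OF qp_self] qp_mem by blast

lemma qp_scale: "quot_scale Y t (quot_proj Y z) = quot_proj Y (t *\<^sub>R z)"
proof -
  obtain y where y: "y \<in> Y" "(SOME x. x \<in> quot_proj Y z) = z + y" using qp_rep by blast
  have "t *\<^sub>R y \<in> Y" using subspace_scale[OF sub y(1)] .
  then show ?thesis unfolding quot_scale_def y(2) by (simp add: scaleR_add_right qp_add)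
qed

lemma qp_plus: "quot_add Y (quot_proj Y p) (quot_proj Y q) = quot_proj Y (p + q)"
proof -
  obtain y where y: "y \<in> Y" "(SOME x. x \<in> quot_proj Y p) = p + y" using qp_rep by blast
  obtain y' where y': "y' \<in> Y" "(SOME x. x \<in> quot_proj Y q) = q + y'" using qp_rep by blast
  have "y + y' \<in> Y" using subspace_add[OF sub y(1) y'(1)] .
  then have "quot_proj Y ((p + q) + (y + y')) = quot_proj Y (p + q)" by (rule qp_add)
  then show ?thesis unfolding quot_add_def y(2) y'(2) by (simp add: algebra_simps)
qed

lemma qp_zero_iff: "quot_proj Y v = quot_zero Y \<longleftrightarrow> v \<in> Y"
proof
  assume "quot_proj Y v = quot_zero Y"
  then have "v \<in> quot_proj Y 0" using qp_self[of v] by (simp add: quot_zero_def)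
  then show "v \<in> Y" unfolding quot_proj_def by simp
next
  assume "v \<in> Y" then show "quot_proj Y v = quot_zero Y"
    using qp_add[of v 0] by (simp add: quot_zero_def)
qed

end



lemma char_Y:
  fixes f :: "'z::real_normed_vector \<Rightarrow> real"
  assumes sub: "subspace Y" and dec: "decomposes f Y" and xi: "\<xi>0 \<in> subdiff f z0"
  shows "Y = {v. \<forall>t::real. f (z0 + t *\<^sub>R v) - f z0 - \<xi>0 (t *\<^sub>R v) = 0}"
proof -
  obtain c l a where ld: "l \<in> dual_space" and nc: "\<not> quot_const_on_some_line Y c"
    and low: "\<forall>X\<in>quot_space Y. c X \<ge> a" and fr: "\<And>z. f z = c (quot_proj Y z) + l z"
    using dec unfolding decomposes_def by blast
  have ll: "linear l" using ld by (simp add: dual_space_def bounded_linear.linear)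
  have xl: "linear \<xi>0" and sg: "\<And>y. f y \<ge> f z0 + \<xi>0 (y - z0)"
    using xi by (auto simp: subdiff_def dual_space_def bounded_linear.linear)
  show ?thesis
  proof (intro set_eqI iffI CollectI allI)
    fix v t assume v: "v \<in> Y"
    have fl: "f (z0 + s *\<^sub>R v) = f z0 + s * l v" for s
    proof -
      have "s *\<^sub>R v \<in> Y" using subspace_scale[OF sub v] .
      then have "quot_proj Y (z0 + s *\<^sub>R v) = quot_proj Y z0" by (rule qp_add[OF sub])
      then show ?thesis using fr[of "z0 + s *\<^sub>R v"] fr[of z0]
        by (simp add: linear_add[OF ll] linear_scale[OF ll])
    qed
    have "\<xi>0 v = l v"
    proof -
      have "f (z0 + s *\<^sub>R v) \<ge> f z0 + s * \<xi>0 v" for s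
        using sg[of "z0 + s *\<^sub>R v"] by (simp add: linear_scale[OF xl])
      from this[of 1] this[of "-1"] show ?thesis using fl[of 1] fl[of "-1"] by simp
    qed
    then show "f (z0 + t *\<^sub>R v) - f z0 - \<xi>0 (t *\<^sub>R v) = 0" using fl[of t]
      by (simp add: linear_scale[OF xl])
  next
    fix v assume "v \<in> {v. \<forall>t::real. f (z0 + t *\<^sub>R v) - f z0 - \<xi>0 (t *\<^sub>R v) = 0}"
    then have fv: "f (z0 + t *\<^sub>R v) = f z0 + t * \<xi>0 v" for t
      by (simp add: linear_scale[OF xl] algebra_simps)
    define K where "K = f z0 - l z0"
    have cl: "c (quot_proj Y (z0 + t *\<^sub>R v)) = K + t * (\<xi>0 v - l v)" for t
      using fr[of "z0 + t *\<^sub>R v"] fv[of t] by (simp add: K_def linear_add[OF ll] linear_scale[OF ll] algebra_simps)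
    have inq: "quot_proj Y z \<in> quot_space Y" for z by (simp add: quot_space_def)
    have eq: "\<xi>0 v = l v"
    proof (rule ccontr)
      assume ne: "\<xi>0 v \<noteq> l v"
      define t where "t = (a - K - 1) / (\<xi>0 v - l v)"
      have "K + t * (\<xi>0 v - l v) = a - 1" using ne by (simp add: t_def)
      then have "c (quot_proj Y (z0 + t *\<^sub>R v)) < a" using cl[of t] by simp
      moreover have "a \<le> c (quot_proj Y (z0 + t *\<^sub>R v))" using low inq by blast
      ultimately show False by simp
    qed
    show "v \<in> Y"
    proof (rule ccontr)
      assume nv: "v \<notin> Y"
      have "quot_const_on_some_line Y c" unfolding quot_const_on_some_line_def
      proof (intro bexI conjI exI allI)
        show "quot_proj Y v \<noteq> quot_zero Y" using nv qp_zero_iff[OF sub] by blast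
        fix t :: real
        show "c (quot_add Y (quot_proj Y z0) (quot_scale Y t (quot_proj Y v))) = K"
          using cl[of t] eq by (simp add: qp_scale[OF sub] qp_plus[OF sub])
      qed (simp_all add: inq)
      with nc show False by blast
    qed
  qed
qed

lemma exists_Y:
  fixes f :: "'z::real_normed_vector \<Rightarrow> real"
  assumes cont: "continuous_on UNIV f" and cv: "convex_on UNIV f"
  shows "\<exists>Y. closed Y \<and> subspace Y \<and> decomposes f Y"
proof -
  obtain \<xi> where xi: "\<xi> \<in> subdiff f 0" using subdiff_nonempty[OF cont cv] by blast
  have bl: "bounded_linear \<xi>" and sg: "\<And>y. f y \<ge> f 0 + \<xi> y"
    using xi by (auto simp: subdiff_def dual_space_def)
  have xl: "linear \<xi>" using bl by (rule bounded_linear.linear)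
  define h where "h z = f z - \<xi> z" for z
  have hcv: "convex_on UNIV h"
  proof (rule convex_onI)
    show "convex (UNIV :: 'z set)" by simp
  next
    fix t :: real and u v :: 'z assume "0 < t" "t < 1"
    then have "f ((1 - t) *\<^sub>R u + t *\<^sub>R v) \<le> (1 - t) * f u + t * f v"
      using convex_onD[OF cv] by auto
    moreover have "\<xi> ((1 - t) *\<^sub>R u + t *\<^sub>R v) = (1 - t) * \<xi> u + t * \<xi> v"
      by (simp add: linear_add[OF xl] linear_scale[OF xl])
    ultimately show "h ((1 - t) *\<^sub>R u + t *\<^sub>R v) \<le> (1 - t) * h u + t * h v"
      unfolding h_def by (simp add: algebra_simps)
  qed
  have hmin: "h y \<ge> h 0" for y using sg[of y] linear_0[OF xl] by (simp add: h_def)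
  have hcont: "continuous_on UNIV h" unfolding h_def
    by (intro continuous_intros cont bounded_linear.continuous_on[OF bl])
  define Y where "Y = {v. \<forall>t::real. h (t *\<^sub>R v) = h 0}"
  have subY: "subspace Y" unfolding subspace_def
  proof (intro conjI ballI allI)
    show "0 \<in> Y" by (simp add: Y_def)
  next
    fix u v assume u: "u \<in> Y" and v: "v \<in> Y"
    show "u + v \<in> Y" unfolding Y_def
    proof (intro CollectI allI antisym hmin)
      fix t :: real
      have e: "(1/2) *\<^sub>R ((2*t) *\<^sub>R u) + (1/2) *\<^sub>R ((2*t) *\<^sub>R v) = t *\<^sub>R (u + v)"
        by (simp add: algebra_simps)
      have "h (t *\<^sub>R (u + v)) \<le> (1/2) * h ((2*t) *\<^sub>R u) + (1/2) * h ((2*t) *\<^sub>R v)"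
        using mid_le[OF hcv, of "(2*t) *\<^sub>R u" "(2*t) *\<^sub>R v"] unfolding e .
      then show "h (t *\<^sub>R (u + v)) \<le> h 0" using u v by (simp add: Y_def)
    qed
  next
    fix c :: real and v assume "v \<in> Y"
    then show "c *\<^sub>R v \<in> Y" by (simp add: Y_def)
  qed
  have clY: "closed Y"
  proof -
    have "Y = (\<Inter>t. {v. h (t *\<^sub>R v) = h 0})" by (auto simp: Y_def)
    moreover have "closed {v. h (t *\<^sub>R v) = h 0}" for t :: real
      by (intro closed_Collect_eq continuous_on_compose2[OF hcont] continuous_intros) auto
    ultimately show ?thesis by auto
  qed
  have inv: "h (z + y) = h z" if y: "y \<in> Y" for z y
  proof -
    have "h (z + t *\<^sub>R y) \<le> (1/2) * h (2 *\<^sub>R z) + (1/2) * h 0" for t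
    proof -
      have e: "(1/2) *\<^sub>R (2 *\<^sub>R z) + (1/2) *\<^sub>R ((2*t) *\<^sub>R y) = z + t *\<^sub>R y"
        by (simp add: algebra_simps)
      have "h (z + t *\<^sub>R y) \<le> (1/2) * h (2 *\<^sub>R z) + (1/2) * h ((2*t) *\<^sub>R y)"
        using mid_le[OF hcv, of "2 *\<^sub>R z" "(2*t) *\<^sub>R y"] unfolding e .
      then show ?thesis using y by (simp add: Y_def)
    qed
    from const_line[OF hcv this, of 1] show ?thesis by simp
  qed
  define c where "c X = h (SOME x. x \<in> X)" for X :: "'z set"
  have cp: "c (quot_proj Y z) = h z" for z
  proof -
    obtain y where "y \<in> Y" "(SOME x. x \<in> quot_proj Y z) = z + y" using qp_rep[OF subY] by blast
    then show ?thesis using inv by (simp add: c_def)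
  qed
  have "decomposes f Y" unfolding decomposes_def
  proof (intro exI conjI)
    show "\<xi> \<in> dual_space" using bl by (simp add: dual_space_def)
    show "\<forall>z. f z = c (quot_proj Y z) + \<xi> z" by (simp add: cp h_def)
    show "\<forall>X\<in>quot_space Y. c X \<ge> h 0" by (auto simp: quot_space_def cp hmin)
    show "h 0 \<in> c ` quot_space Y" unfolding quot_space_def
      by (rule image_eqI[of _ _ "quot_proj Y 0"]) (simp_all add: cp)
    show "quot_convex_on Y c" unfolding quot_convex_on_def quot_space_def
    proof (intro ballI allI impI)
      fix A B and u :: real assume "A \<in> range (quot_proj Y)" "B \<in> range (quot_proj Y)" and u: "0 \<le> u \<and> u \<le> 1"
      then obtain p q where A: "A = quot_proj Y p" and B: "B = quot_proj Y q" by blast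
      have "h (u *\<^sub>R p + (1 - u) *\<^sub>R q) \<le> u * h p + (1 - u) * h q"
        using convex_onD[OF hcv, of "1 - u" p q] u by simp
      then show "c (quot_add Y (quot_scale Y u A) (quot_scale Y (1 - u) B)) \<le> u * c A + (1 - u) * c B"
        unfolding A B by (simp add: qp_scale[OF subY] qp_plus[OF subY] cp)
    qed
    show "\<not> quot_const_on_some_line Y c" unfolding quot_const_on_some_line_def quot_space_def
    proof
      assume "\<exists>X\<in>range (quot_proj Y). \<exists>V\<in>range (quot_proj Y). V \<noteq> quot_zero Y \<and>
        (\<exists>k. \<forall>t::real. c (quot_add Y X (quot_scale Y t V)) = k)"
      then obtain x v k where nz: "quot_proj Y v \<noteq> quot_zero Y"
        and kk: "\<And>t::real. c (quot_add Y (quot_proj Y x) (quot_scale Y t (quot_proj Y v))) = k" by blast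
      have hk: "h (x + t *\<^sub>R v) = k" for t using kk[of t] by (simp add: qp_scale[OF subY] qp_plus[OF subY] cp)
      have "h (0 + t *\<^sub>R v) \<le> (1/2) * k + (1/2) * h (- x)" for t
      proof -
        have e: "(1/2) *\<^sub>R (x + (2*t) *\<^sub>R v) + (1/2) *\<^sub>R (- x) = 0 + t *\<^sub>R v"
          by (simp add: algebra_simps)
        have "h (0 + t *\<^sub>R v) \<le> (1/2) * h (x + (2*t) *\<^sub>R v) + (1/2) * h (- x)"
          using mid_le[OF hcv, of "x + (2*t) *\<^sub>R v" "- x"] unfolding e .
        then show ?thesis using hk by simp
      qed
      from const_line[OF hcv this] have "v \<in> Y" by (simp add: Y_def)
      with nz qp_zero_iff[OF subY] show False by blast
    qed
  qed
  with clY subY show ?thesis by blast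
qed

theorem mainTheorem2:
  fixes f :: "'z::banach \<Rightarrow> real"
  assumes "continuous_on UNIV f" and "convex_on UNIV f"
  shows "(\<exists>!Y. closed Y \<and> subspace Y \<and> decomposes f Y) \<and>
         (\<forall>Y. closed Y \<and> subspace Y \<and> decomposes f Y \<longrightarrow>
            (\<forall>z0 \<xi>0. \<xi>0 \<in> subdiff f z0 \<longrightarrow>
               Y = {v. \<forall>t::real. f (z0 + t *\<^sub>R v) - f z0 - \<xi>0 (t *\<^sub>R v) = 0}))"
proof (intro conjI allI impI)
  obtain \<xi> where xi: "\<xi> \<in> subdiff f 0" using subdiff_nonempty[OF assms] by blast
  show "\<exists>!Y. closed Y \<and> subspace Y \<and> decomposes f Y"
  proof (rule ex_ex1I)
    show "\<exists>Y. closed Y \<and> subspace Y \<and> decomposes f Y" by (rule exists_Y[OF assms])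
  next
    fix Y1 Y2 assume "closed Y1 \<and> subspace Y1 \<and> decomposes f Y1" "closed Y2 \<and> subspace Y2 \<and> decomposes f Y2"
    then have "Y1 = {v. \<forall>t::real. f (0 + t *\<^sub>R v) - f 0 - \<xi> (t *\<^sub>R v) = 0}"
      "Y2 = {v. \<forall>t::real. f (0 + t *\<^sub>R v) - f 0 - \<xi> (t *\<^sub>R v) = 0}"
      using char_Y[OF _ _ xi] by blast+
    then show "Y1 = Y2" by simp
  qed
next
  fix Y z0 \<xi>0 assume "closed Y \<and> subspace Y \<and> decomposes f Y" "\<xi>0 \<in> subdiff f z0"
  then show "Y = {v. \<forall>t::real. f (z0 + t *\<^sub>R v) - f z0 - \<xi>0 (t *\<^sub>R v) = 0}"
    using char_Y by blast
qed

end
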